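(* Let $G$ be a countable group. Then: (1) If $\mu$ is a finitely additive left-invariant mean on $G$ with $\textup{dc}_\mu(G)=0$ then $\textup{dc}_{\mu'}(G)=0$ for every finitely additive left-invariant mean $\mu'$ on $G$. (2) If $\alpha>\frac{1}{2}$, and there is either a finitely additive left-invariant mean $\mu$ on $G$ with $\textup{dc}_\mu(G)=\alpha$ or a sequence $M$ of probability measures on $G$ that measures index uniformly with $\textup{dc}_M(G)=\alpha$, then $\textup{dc}_{\mu'}(G)=\alpha$ for every finitely additive left-invariant mean $\mu'$ on $G$ and $\textup{dc}_{M'}(G)=\alpha$ for every sequence $M'$ of probability measures on $G$ that measures index uniformly; moreover the $\limsup$ in the definition of $\textup{dc}_{M'}(G)$ is actually a limit.
   Context: A finitely additive left-invariant mean is a positive normalised left-invariant linear functional on $\ell^\infty(G)$, $\mu(X)=\int1_X\,d\mu$, and $\textup{dc}_\mu(G)=\int_x\int_y1_{\{xy=yx\}}\,d\mu(x)\,d\mu(y)$. A sequence $M=(\mu_n)$ of probability measures measures index uniformly if $\mu_n(xH)\to1/[G:H]$ uniformly over $x\in G$ and subgroups $H$ (with $1/[G:H]=0$ for infinite index); $\textup{dc}_M(G)=\limsup_n(\mu_n\times\mu_n)(\{(x,y):xy=yx\})$. *)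

theory Defs
  imports "HOL-Algebra.Coset" "HOL-Probability.Probability"
begin

text \<open>Elements of l-infinity(G): real functions bounded on the carrier of G.
  A function on the ambient type represents its restriction to the carrier.\<close>
definition linfty :: "('a, 'b) monoid_scheme \<Rightarrow> ('a \<Rightarrow> real) set" where
  "linfty G = {f. \<exists>B. \<forall>x\<in>carrier G. \<bar>f x\<bar> \<le> B}"

definition fa_left_inv_mean :: "('a, 'b) monoid_scheme \<Rightarrow> (('a \<Rightarrow> real) \<Rightarrow> real) \<Rightarrow> bool" where
  "fa_left_inv_mean G m \<longleftrightarrow>
     (\<forall>f\<in>linfty G. \<forall>g\<in>linfty G. (\<forall>x\<in>carrier G. f x = g x) \<longrightarrow> m f = m g) \<and>
     (\<forall>f\<in>linfty G. \<forall>g\<in>linfty G. m (\<lambda>x. f x + g x) = m f + m g) \<and>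
     (\<forall>f\<in>linfty G. \<forall>c::real. m (\<lambda>x. c * f x) = c * m f) \<and>
     (\<forall>f\<in>linfty G. (\<forall>x\<in>carrier G. 0 \<le> f x) \<longrightarrow> 0 \<le> m f) \<and>
     m (\<lambda>x. 1) = 1 \<and>
     (\<forall>f\<in>linfty G. \<forall>g\<in>carrier G. m (\<lambda>x. f (g \<otimes>\<^bsub>G\<^esub> x)) = m f)"

definition dc_mean :: "('a, 'b) monoid_scheme \<Rightarrow> (('a \<Rightarrow> real) \<Rightarrow> real) \<Rightarrow> real" where
  "dc_mean G m = m (\<lambda>y. m (\<lambda>x. if x \<otimes>\<^bsub>G\<^esub> y = y \<otimes>\<^bsub>G\<^esub> x then 1 else 0))"

text \<open>1/[G:H], with the convention 1/[G:H] = 0 for infinite index.\<close>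
definition inv_index :: "('a, 'b) monoid_scheme \<Rightarrow> 'a set \<Rightarrow> real" where
  "inv_index G H = (if finite (rcosets\<^bsub>G\<^esub> H) then 1 / real (card (rcosets\<^bsub>G\<^esub> H)) else 0)"

definition measures_index_uniformly :: "('a, 'b) monoid_scheme \<Rightarrow> (nat \<Rightarrow> 'a pmf) \<Rightarrow> bool" where
  "measures_index_uniformly G M \<longleftrightarrow>
     (\<forall>n. set_pmf (M n) \<subseteq> carrier G) \<and>
     (\<forall>e>0. \<exists>N. \<forall>n\<ge>N. \<forall>H. subgroup H G \<longrightarrow> (\<forall>x\<in>carrier G.
         \<bar>measure_pmf.prob (M n) (x <#\<^bsub>G\<^esub> H) - inv_index G H\<bar> < e))"

definition comm_prob :: "('a, 'b) monoid_scheme \<Rightarrow> 'a pmf \<Rightarrow> real" where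
  "comm_prob G p = measure_pmf.prob (pair_pmf p p) {(x, y). x \<otimes>\<^bsub>G\<^esub> y = y \<otimes>\<^bsub>G\<^esub> x}"

definition dc_seq :: "('a, 'b) monoid_scheme \<Rightarrow> (nat \<Rightarrow> 'a pmf) \<Rightarrow> ereal" where
  "dc_seq G M = limsup (\<lambda>n. ereal (comm_prob G (M n)))"

end

theory Submission imports Defs "HOL-Algebra.Left_Coset" begin


definition indf :: "'x set \<Rightarrow> 'x \<Rightarrow> real" where
  "indf S x = (if x \<in> S then 1 else 0)"

lemma linftyI: "(\<And>x. x \<in> carrier G \<Longrightarrow> \<bar>f x\<bar> \<le> B) \<Longrightarrow> f \<in> linfty G"
  unfolding linfty_def by blast

lemma linfty_indf[simp]: "indf S \<in> linfty G"
  by (rule linftyI[where B=1]) (simp add: indf_def)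

lemma linfty_const[simp]: "(\<lambda>x. c) \<in> linfty G"
  by (rule linftyI[where B="\<bar>c\<bar>"]) simp

lemma linfty_add: "f \<in> linfty G \<Longrightarrow> g \<in> linfty G \<Longrightarrow> (\<lambda>x. f x + g x) \<in> linfty G"
proof -
  assume "f \<in> linfty G" "g \<in> linfty G"
  then obtain A B where "\<forall>x\<in>carrier G. \<bar>f x\<bar> \<le> A" "\<forall>x\<in>carrier G. \<bar>g x\<bar> \<le> B"
    unfolding linfty_def by blast
  then show ?thesis by (intro linftyI[where B="A+B"]) (smt (verit))
qed

lemma linfty_scale: "f \<in> linfty G \<Longrightarrow> (\<lambda>x. c * f x) \<in> linfty G"
proof -
  assume "f \<in> linfty G"
  then obtain A where A: "\<forall>x\<in>carrier G. \<bar>f x\<bar> \<le> A"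
    unfolding linfty_def by blast
  show ?thesis
  proof (rule linftyI[where B="\<bar>c\<bar>*A"])
    fix x assume "x \<in> carrier G"
    then show "\<bar>c * f x\<bar> \<le> \<bar>c\<bar> * A" using A by (simp add: abs_mult mult_left_mono)
  qed
qed

lemma linfty_sum: "finite F \<Longrightarrow> (\<And>i. i \<in> F \<Longrightarrow> h i \<in> linfty G) \<Longrightarrow> (\<lambda>x. \<Sum>i\<in>F. h i x) \<in> linfty G"
  by (induction F rule: finite_induct) (auto intro: linfty_add)

lemma linfty_diff: "f \<in> linfty G \<Longrightarrow> g \<in> linfty G \<Longrightarrow> (\<lambda>x. f x - g x) \<in> linfty G"
  using linfty_add[of f G "\<lambda>x. (-1) * g x"] linfty_scale[of g G "-1"] by simp

locale gmean = group G for G (structure) +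
  fixes m :: "('a \<Rightarrow> real) \<Rightarrow> real"
  assumes mean: "fa_left_inv_mean G m"
begin

lemma m_cong: "f \<in> linfty G \<Longrightarrow> g \<in> linfty G \<Longrightarrow> (\<And>x. x \<in> carrier G \<Longrightarrow> f x = g x) \<Longrightarrow> m f = m g"
  using mean unfolding fa_left_inv_mean_def by blast

lemma m_add: "f \<in> linfty G \<Longrightarrow> g \<in> linfty G \<Longrightarrow> m (\<lambda>x. f x + g x) = m f + m g"
  using mean unfolding fa_left_inv_mean_def by blast

lemma m_scale: "f \<in> linfty G \<Longrightarrow> m (\<lambda>x. c * f x) = c * m f"
  using mean unfolding fa_left_inv_mean_def by blast

lemma m_nonneg: "f \<in> linfty G \<Longrightarrow> (\<And>x. x \<in> carrier G \<Longrightarrow> 0 \<le> f x) \<Longrightarrow> 0 \<le> m f"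
  using mean unfolding fa_left_inv_mean_def by blast

lemma m_one: "m (\<lambda>x. 1) = 1"
  using mean unfolding fa_left_inv_mean_def by blast

lemma m_transl: "f \<in> linfty G \<Longrightarrow> g \<in> carrier G \<Longrightarrow> m (\<lambda>x. f (g \<otimes> x)) = m f"
  using mean unfolding fa_left_inv_mean_def by blast

lemma m_const: "m (\<lambda>x. c) = c"
  using m_scale[of "\<lambda>x. 1" c] m_one by simp

lemma m_diff: "f \<in> linfty G \<Longrightarrow> g \<in> linfty G \<Longrightarrow> m (\<lambda>x. f x - g x) = m f - m g"
  using m_add[of f "\<lambda>x. (-1) * g x"] m_scale[of g "-1"] linfty_scale[of g G "-1"] by simp

lemma m_mono: "f \<in> linfty G \<Longrightarrow> g \<in> linfty G \<Longrightarrow> (\<And>x. x \<in> carrier G \<Longrightarrow> f x \<le> g x) \<Longrightarrow> m f \<le> m g"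
  using m_nonneg[of "\<lambda>x. g x - f x"] m_diff[of g f] linfty_diff[of g G f] by simp

lemma m_sum: "finite F \<Longrightarrow> (\<And>i. i \<in> F \<Longrightarrow> h i \<in> linfty G) \<Longrightarrow> m (\<lambda>x. \<Sum>i\<in>F. h i x) = (\<Sum>i\<in>F. m (h i))"
proof (induction F rule: finite_induct)
  case empty then show ?case using m_const[of 0] by simp
next
  case (insert a F)
  have "m (\<lambda>x. \<Sum>i\<in>insert a F. h i x) = m (\<lambda>x. h a x + (\<Sum>i\<in>F. h i x))"
    using insert by simp
  also have "\<dots> = m (h a) + m (\<lambda>x. \<Sum>i\<in>F. h i x)"
    using insert by (intro m_add linfty_sum) auto
  finally show ?case using insert by simp
qed

lemma m_ind_ge0: "0 \<le> m (indf S)"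
  by (rule m_nonneg) (auto simp: indf_def)

lemma m_ind_le1: "m (indf S) \<le> 1"
  using m_mono[of "indf S" "\<lambda>x. 1"] m_one by (auto simp: indf_def)

lemma m_ind_transl:
  assumes S: "S \<subseteq> carrier G" and g: "g \<in> carrier G"
  shows "m (indf ((l_coset G g S))) = m (indf S)"
proof -
  have "m (indf ((l_coset G g S))) = m (\<lambda>x. indf ((l_coset G g S)) (g \<otimes> x))"
    using m_transl[of "indf ((l_coset G g S))" g] g by simp
  also have "\<dots> = m (indf S)"
  proof (rule m_cong)
    show "(\<lambda>x. indf ((l_coset G g S)) (g \<otimes> x)) \<in> linfty G"
      by (rule linftyI[where B=1]) (simp add: indf_def)
    fix x assume x: "x \<in> carrier G"
    have "g \<otimes> x \<in> (l_coset G g S) \<longleftrightarrow> x \<in> S"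
    proof
      assume "g \<otimes> x \<in> (l_coset G g S)"
      then obtain s where "s \<in> S" "g \<otimes> x = g \<otimes> s" by (auto simp: l_coset_def)
      then show "x \<in> S" using S g x by (metis Units_eq Units_l_cancel subsetD)
    qed (auto simp: l_coset_def)
    then show "indf ((l_coset G g S)) (g \<otimes> x) = indf S x" by (simp add: indf_def)
  qed simp
  finally show ?thesis .
qed


lemma disj_bound:
  assumes F: "finite F" "F \<subseteq> carrier G" and X: "X \<subseteq> carrier G"
    and disj: "\<forall>f\<in>F. \<forall>g\<in>F. f \<noteq> g \<longrightarrow> ((l_coset G f X)) \<inter> ((l_coset G g X)) = {}"
  shows "real (card F) * m (indf X) \<le> 1"
proof -
  have pt: "(\<Sum>f\<in>F. indf ((l_coset G f X)) x) \<le> 1" for x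
  proof -
    have "(\<Sum>f\<in>F. indf ((l_coset G f X)) x) = (\<Sum>f\<in>{f\<in>F. x \<in> (l_coset G f X)}. 1)"
      by (simp only: indf_def sum.inter_filter[OF F(1)])
    also have "\<dots> = real (card {f\<in>F. x \<in> (l_coset G f X)})" by simp
    also have "card {f\<in>F. x \<in> (l_coset G f X)} \<le> Suc 0"
      using F disj by (subst card_le_Suc0_iff_eq) auto
    finally show ?thesis by simp
  qed
  have "real (card F) * m (indf X) = (\<Sum>f\<in>F. m (indf X))" by simp
  also have "\<dots> = (\<Sum>f\<in>F. m (indf ((l_coset G f X))))"
    using m_ind_transl X F by (intro sum.cong) auto
  also have "\<dots> = m (\<lambda>x. \<Sum>f\<in>F. indf ((l_coset G f X)) x)"
    using F by (intro m_sum[symmetric]) auto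
  also have "\<dots> \<le> m (\<lambda>x. 1)"
    using F pt by (intro m_mono linfty_sum) auto
  finally show ?thesis using m_one by simp
qed

lemma cover_from_mean:
  assumes X: "X \<subseteq> carrier G" and pos: "0 < m (indf X)"
  shows "\<exists>F. finite F \<and> F \<subseteq> carrier G \<and> real (card F) * m (indf X) \<le> 1 \<and>
    (\<forall>g\<in>carrier G. \<exists>f\<in>F. \<exists>a\<in>X. \<exists>b\<in>X. g = f \<otimes> (a \<otimes> inv b))"
proof -
  define P where "P F \<longleftrightarrow> finite F \<and> F \<subseteq> carrier G \<and>
     (\<forall>f\<in>F. \<forall>g\<in>F. f \<noteq> g \<longrightarrow> ((l_coset G f X)) \<inter> ((l_coset G g X)) = {})" for F
  define Q where "Q n \<longleftrightarrow> (\<exists>F. P F \<and> card F = n)" for n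
  have bnd: "real (card F) * m (indf X) \<le> 1" if "P F" for F
    by (rule disj_bound) (use that X in \<open>auto simp: P_def\<close>)
  have "Q 0" unfolding Q_def P_def by (intro exI[of _ "{}"]) auto
  moreover have "\<forall>n. Q n \<longrightarrow> n \<le> nat \<lfloor>1 / m (indf X)\<rfloor>"
  proof (intro allI impI)
    fix n assume "Q n"
    then obtain F where "P F" "card F = n" unfolding Q_def by blast
    then have "real n * m (indf X) \<le> 1" using bnd by blast
    then have "real n \<le> 1 / m (indf X)" using pos by (simp add: le_divide_eq)
    then show "n \<le> nat \<lfloor>1 / m (indf X)\<rfloor>" using le_nat_floor by blast
  qed
  ultimately have "\<exists>n. Q n \<and> (\<forall>k. Q k \<longrightarrow> k \<le> n)"
    by (rule Nat.ex_has_greatest_nat)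
  then obtain n where Qn: "Q n" and mx: "\<forall>k. Q k \<longrightarrow> k \<le> n"
    by blast
  obtain F where PF: "P F" and cF: "card F = n" using Qn unfolding Q_def by blast
  have Xne: "X \<noteq> {}"
  proof
    assume "X = {}"
    then have "indf X = (\<lambda>x. 0)" by (auto simp: indf_def)
    then show False using pos m_const[of 0] by simp
  qed
  have cov: "\<exists>f\<in>F. \<exists>a\<in>X. \<exists>b\<in>X. g = f \<otimes> (a \<otimes> inv b)" if g: "g \<in> carrier G" for g
  proof (rule ccontr)
    assume nc: "\<not> ?thesis"
    have dis: "\<forall>f\<in>F. ((l_coset G f X)) \<inter> ((l_coset G g X)) = {}"
    proof (intro ballI equalityI subsetI)
      fix f z assume f: "f \<in> F" and z: "z \<in> ((l_coset G f X)) \<inter> ((l_coset G g X))"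
      then obtain a b where a: "a \<in> X" "z = f \<otimes> a" and b: "b \<in> X" "z = g \<otimes> b"
        by (auto simp: l_coset_def)
      have fc: "f \<in> carrier G" using f PF unfolding P_def by auto
      have ac: "a \<in> carrier G" "b \<in> carrier G" using a b X by auto
      have "g = f \<otimes> (a \<otimes> inv b)"
      proof -
        have "g \<otimes> b = f \<otimes> a" using a b by simp
        then have "g = (f \<otimes> a) \<otimes> inv b"
          using inv_solve_right[of g "f \<otimes> a" b] ac fc g by auto
        then show ?thesis using ac fc by (simp add: m_assoc)
      qed
      then show "z \<in> {}" using nc f a b by blast
    qed simp
    have gF: "g \<notin> F"
    proof
      assume "g \<in> F"
      then have "((l_coset G g X)) \<inter> ((l_coset G g X)) = {}" using dis by blast
      moreover obtain x where "x \<in> X" using Xne by blast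
      ultimately show False by (auto simp: l_coset_def)
    qed
    have "P (insert g F)" using PF dis g unfolding P_def by (auto simp: Int_commute)
    moreover have "card (insert g F) = Suc n" using gF PF cF unfolding P_def by simp
    ultimately have "Q (Suc n)" unfolding Q_def by blast
    then have "Suc n \<le> n" using mx by blast
    then show False by simp
  qed
  have "finite F" "F \<subseteq> carrier G" using PF unfolding P_def by auto
  then show ?thesis using bnd[OF PF] cov by (intro exI[of _ F]) blast
qed

lemma cover_mean:
  assumes S: "S \<subseteq> carrier G" and F: "finite F" "F \<subseteq> carrier G"
    and cov: "carrier G \<subseteq> (\<Union>f\<in>F. (l_coset G f S))"
  shows "1 \<le> real (card F) * m (indf S)"
proof -
  have pt: "1 \<le> (\<Sum>f\<in>F. indf ((l_coset G f S)) x)" if x: "x \<in> carrier G" for x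
  proof -
    obtain f where f: "f \<in> F" "x \<in> (l_coset G f S)" using cov x by blast
    have "indf ((l_coset G f S)) x \<le> (\<Sum>f\<in>F. indf ((l_coset G f S)) x)"
      using F f by (intro member_le_sum) (auto simp: indf_def)
    then show ?thesis using f by (simp add: indf_def)
  qed
  have "1 = m (\<lambda>x. 1)" using m_one by simp
  also have "\<dots> \<le> m (\<lambda>x. \<Sum>f\<in>F. indf ((l_coset G f S)) x)"
    using F pt by (intro m_mono linfty_sum) auto
  also have "\<dots> = (\<Sum>f\<in>F. m (indf ((l_coset G f S))))"
    using F by (intro m_sum) auto
  also have "\<dots> = (\<Sum>f\<in>F. m (indf S))"
    using m_ind_transl S F by (intro sum.cong) auto
  also have "\<dots> = real (card F) * m (indf S)" by simp
  finally show ?thesis .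
qed

lemma mean_lcosets:
  assumes H: "subgroup H G" and fin: "finite (lcosets H)"
  shows "real (card (lcosets H)) * m (indf H) = 1"
proof -
  have pt: "(\<Sum>c\<in>lcosets H. indf c x) = 1" if x: "x \<in> carrier G" for x
  proof -
    obtain c where c: "c \<in> lcosets H" "x \<in> c" using lcosets_part_G[OF H] x by blast
    have "(\<Sum>c\<in>lcosets H. indf c x) = (\<Sum>c\<in>{c\<in>lcosets H. x \<in> c}. 1)"
      by (simp only: indf_def sum.inter_filter[OF fin])
    also have "{c\<in>lcosets H. x \<in> c} = {c}"
      using c lcos_disjoint[OF H] by blast
    finally show ?thesis by simp
  qed
  have "1 = m (\<lambda>x. 1)" using m_one by simp
  also have "\<dots> = m (\<lambda>x. \<Sum>c\<in>lcosets H. indf c x)"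
    using fin pt by (intro m_cong linfty_sum) auto
  also have "\<dots> = (\<Sum>c\<in>lcosets H. m (indf c))"
    using fin by (intro m_sum) auto
  also have "\<dots> = (\<Sum>c\<in>lcosets H. m (indf H))"
  proof (rule sum.cong)
    fix c assume "c \<in> lcosets H"
    then obtain a where "a \<in> carrier G" "c = (l_coset G a H)" unfolding LCOSETS_def by blast
    then show "m (indf c) = m (indf H)" using m_ind_transl subgroup.subset[OF H] by simp
  qed simp
  finally show ?thesis by simp
qed

end

lemma (in group) lcosets_finite_cover:
  assumes H: "subgroup H G" and F: "finite F" "F \<subseteq> carrier G"
    and cov: "carrier G \<subseteq> (\<Union>f\<in>F. (l_coset G f H))"
  shows "finite (lcosets H) \<and> card (lcosets H) \<le> card F"
proof -
  have "lcosets H \<subseteq> (\<lambda>f. (l_coset G f H)) ` F"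
  proof
    fix c assume "c \<in> lcosets H"
    then obtain a where a: "a \<in> carrier G" "c = (l_coset G a H)" unfolding LCOSETS_def by blast
    then obtain f where f: "f \<in> F" "a \<in> (l_coset G f H)" using cov by blast
    then have "(l_coset G f H) = (l_coset G a H)" using l_repr_independence[OF f(2) _ H] F by blast
    then show "c \<in> (\<lambda>f. (l_coset G f H)) ` F" using a f by blast
  qed
  then show ?thesis using F by (meson card_image_le finite_imageI finite_subset le_trans card_mono)
qed

context group begin

lemma lcos_eq:
  assumes H: "subgroup H G" and a: "a \<in> carrier G" and b: "b \<in> carrier G"
  shows "l_coset G a H = l_coset G b H \<longleftrightarrow> inv a \<otimes> b \<in> H"
proof
  assume e: "l_coset G a H = l_coset G b H"
  have "b \<in> l_coset G b H" using lcos_self[OF b H] .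
  then have "b \<in> l_coset G a H" using e by simp
  then show "inv a \<otimes> b \<in> H" using subgroup.lcos_module_imp[OF H is_group a] by blast
next
  assume "inv a \<otimes> b \<in> H"
  then have "b \<in> l_coset G a H" using subgroup.lcos_module_rev[OF H is_group a b] by blast
  then show "l_coset G a H = l_coset G b H" using l_repr_independence[OF _ a H] by blast
qed

lemma set_inv_lcos:
  assumes H: "subgroup H G" and a: "a \<in> carrier G"
  shows "set_inv (l_coset G a H) = H #> inv a"
proof (intro equalityI subsetI)
  fix x assume "x \<in> set_inv (l_coset G a H)"
  then obtain h where h: "h \<in> H" "x = inv (a \<otimes> h)" by (auto simp: SET_INV_def l_coset_def)
  have hc: "h \<in> carrier G" using h H subgroup.subset by blast
  have "x = inv h \<otimes> inv a" using h(2) inv_mult_group[OF a hc] by simp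
  moreover have "inv h \<in> H" by (rule subgroup.m_inv_closed[OF H h(1)])
  ultimately show "x \<in> H #> inv a" unfolding r_coset_def by blast
next
  fix x assume "x \<in> H #> inv a"
  then obtain h where h: "h \<in> H" "x = h \<otimes> inv a" by (auto simp: r_coset_def)
  have hc: "h \<in> carrier G" using h H subgroup.subset by blast
  have "x = inv (a \<otimes> inv h)" using h(2) inv_mult_group[OF a inv_closed[OF hc]] hc by simp
  moreover have "inv h \<in> H" by (rule subgroup.m_inv_closed[OF H h(1)])
  moreover have "a \<otimes> inv h \<in> l_coset G a H" using \<open>inv h \<in> H\<close> unfolding l_coset_def by blast
  ultimately show "x \<in> set_inv (l_coset G a H)" unfolding SET_INV_def by blast
qed

lemma set_inv_inv: "X \<subseteq> carrier G \<Longrightarrow> set_inv (set_inv X) = X"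
  by (auto simp: SET_INV_def) (metis inv_inv subsetD)+

lemma lcosets_rcosets:
  assumes H: "subgroup H G"
  shows "rcosets H = SET_INV G ` (lcosets H)" "inj_on (SET_INV G) (lcosets H)"
proof -
  show "rcosets H = SET_INV G ` (lcosets H)"
  proof (intro equalityI subsetI)
    fix X assume "X \<in> rcosets H"
    then obtain b where b: "b \<in> carrier G" "X = H #> b" unfolding RCOSETS_def by blast
    then have "X = set_inv (l_coset G (inv b) H)" using set_inv_lcos[OF H, of "inv b"] by simp
    moreover have "l_coset G (inv b) H \<in> lcosets H" using b unfolding LCOSETS_def by blast
    ultimately show "X \<in> SET_INV G ` (lcosets H)" by blast
  next
    fix X assume "X \<in> SET_INV G ` (lcosets H)"
    then obtain a where a: "a \<in> carrier G" "X = set_inv (l_coset G a H)" unfolding LCOSETS_def by blast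
    then show "X \<in> rcosets H" using set_inv_lcos[OF H a(1)] unfolding RCOSETS_def by auto
  qed
  show "inj_on (SET_INV G) (lcosets H)"
  proof (rule inj_on_inverseI)
    fix X assume "X \<in> lcosets H"
    then have "X \<subseteq> carrier G" using subgroup.lcosets_carrier[OF H is_group] by blast
    then show "set_inv (set_inv X) = X" by (rule set_inv_inv)
  qed
qed

lemma inv_index_lcosets:
  assumes H: "subgroup H G"
  shows "inv_index G H = (if finite (lcosets H) then 1 / real (card (lcosets H)) else 0)"
proof -
  have "finite (rcosets H) = finite (lcosets H)" "card (rcosets H) = card (lcosets H)"
    using lcosets_rcosets[OF H] finite_image_iff card_image by auto
  then show ?thesis unfolding inv_index_def by simp
qed

definition rep :: "'a set \<Rightarrow> 'a set \<Rightarrow> 'a" where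
  "rep K X = (SOME a. a \<in> carrier G \<and> X = l_coset G a K)"

lemma rep:
  assumes "X \<in> lcosets K"
  shows "rep K X \<in> carrier G" "X = l_coset G (rep K X) K"
proof -
  have "\<exists>a. a \<in> carrier G \<and> X = l_coset G a K" using assms unfolding LCOSETS_def by blast
  then have "rep K X \<in> carrier G \<and> X = l_coset G (rep K X) K"
    unfolding rep_def by (rule someI_ex)
  then show "rep K X \<in> carrier G" "X = l_coset G (rep K X) K" by auto
qed

lemma lcosets_mono:
  assumes K: "subgroup K G" and H: "subgroup H G" and KH: "K \<subseteq> H"
    and fin: "finite (lcosets K)"
  shows "finite (lcosets H) \<and> card (lcosets H) \<le> card (lcosets K)"
proof -
  have "lcosets H \<subseteq> (\<lambda>X. l_coset G (rep K X) H) ` (lcosets K)"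
  proof
    fix Y assume "Y \<in> lcosets H"
    then obtain a where a: "a \<in> carrier G" "Y = l_coset G a H" unfolding LCOSETS_def by blast
    define X where "X = l_coset G a K"
    have X: "X \<in> lcosets K" using a unfolding X_def LCOSETS_def by blast
    have "l_coset G a K = l_coset G (rep K X) K" using rep(2)[OF X] unfolding X_def by simp
    then have "inv a \<otimes> rep K X \<in> K" using lcos_eq[OF K a(1) rep(1)[OF X]] by simp
    then have "l_coset G a H = l_coset G (rep K X) H" using lcos_eq[OF H a(1) rep(1)[OF X]] KH by blast
    then show "Y \<in> (\<lambda>X. l_coset G (rep K X) H) ` (lcosets K)" using X a by blast
  qed
  then show ?thesis using fin by (meson card_image_le finite_imageI finite_subset le_trans card_mono)
qed

lemma lcosets_inter:
  assumes H1: "subgroup H1 G" and H2: "subgroup H2 G"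
    and f1: "finite (lcosets H1)" and f2: "finite (lcosets H2)"
  shows "finite (lcosets (H1 \<inter> H2)) \<and> card (lcosets (H1 \<inter> H2)) \<le> card (lcosets H1) * card (lcosets H2)"
proof -
  define K where "K = H1 \<inter> H2"
  have K: "subgroup K G" unfolding K_def using H1 H2 by (rule subgroups_Inter_pair)
  define \<psi> where "\<psi> X = (l_coset G (rep K X) H1, l_coset G (rep K X) H2)" for X
  have inj: "inj_on \<psi> (lcosets K)"
  proof (rule inj_onI)
    fix X Y assume X: "X \<in> lcosets K" and Y: "Y \<in> lcosets K" and e: "\<psi> X = \<psi> Y"
    note rX = rep[OF X] and rY = rep[OF Y]
    have "inv (rep K X) \<otimes> rep K Y \<in> H1" using e lcos_eq[OF H1 rX(1) rY(1)] unfolding \<psi>_def by simp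
    moreover have "inv (rep K X) \<otimes> rep K Y \<in> H2" using e lcos_eq[OF H2 rX(1) rY(1)] unfolding \<psi>_def by simp
    ultimately have "inv (rep K X) \<otimes> rep K Y \<in> K" unfolding K_def by blast
    then show "X = Y" using lcos_eq[OF K rX(1) rY(1)] rX(2) rY(2) by simp
  qed
  have sub: "\<psi> ` (lcosets K) \<subseteq> (lcosets H1) \<times> (lcosets H2)"
    using rep(1) unfolding \<psi>_def LCOSETS_def by blast
  have fin: "finite ((lcosets H1) \<times> (lcosets H2))" using f1 f2 by simp
  have "finite (lcosets K)" using inj sub fin by (meson finite_imageD finite_subset)
  moreover have "card (lcosets K) \<le> card ((lcosets H1) \<times> (lcosets H2))"
    using card_inj_on_le[OF inj sub fin] .
  ultimately show ?thesis unfolding K_def by (simp add: card_cartesian_product)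
qed

end



definition cent :: "('a, 'b) monoid_scheme \<Rightarrow> 'a \<Rightarrow> 'a set" where
  "cent G y = {x \<in> carrier G. x \<otimes>\<^bsub>G\<^esub> y = y \<otimes>\<^bsub>G\<^esub> x}"

definition ctr :: "('a, 'b) monoid_scheme \<Rightarrow> 'a set" where
  "ctr G = {z \<in> carrier G. \<forall>x\<in>carrier G. z \<otimes>\<^bsub>G\<^esub> x = x \<otimes>\<^bsub>G\<^esub> z}"

context group begin

lemma comm_inv:
  assumes x: "x \<in> carrier G" and y: "y \<in> carrier G" and c: "x \<otimes> y = y \<otimes> x"
  shows "inv x \<otimes> y = y \<otimes> inv x"
proof -
  have "inv x \<otimes> y = inv x \<otimes> y \<otimes> (x \<otimes> inv x)" using x y by simp
  also have "\<dots> = inv x \<otimes> (y \<otimes> x) \<otimes> inv x" using x y by (simp add: m_assoc)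
  also have "\<dots> = inv x \<otimes> (x \<otimes> y) \<otimes> inv x" using c by simp
  also have "\<dots> = y \<otimes> inv x" using x y by (simp add: m_assoc[symmetric])
  finally show ?thesis .
qed

lemma comm_mult:
  assumes x: "x \<in> carrier G" and x': "x' \<in> carrier G" and y: "y \<in> carrier G"
    and c: "x \<otimes> y = y \<otimes> x" and c': "x' \<otimes> y = y \<otimes> x'"
  shows "(x \<otimes> x') \<otimes> y = y \<otimes> (x \<otimes> x')"
proof -
  have "(x \<otimes> x') \<otimes> y = x \<otimes> (x' \<otimes> y)" using x x' y by (simp add: m_assoc)
  also have "\<dots> = (x \<otimes> y) \<otimes> x'" using x x' y c' by (simp add: m_assoc)
  also have "\<dots> = y \<otimes> (x \<otimes> x')" using x x' y c by (simp add: m_assoc)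
  finally show ?thesis .
qed

lemma subgroup_cent:
  assumes y: "y \<in> carrier G"
  shows "subgroup (cent G y) G"
proof (rule subgroupI)
  show "cent G y \<subseteq> carrier G" unfolding cent_def by auto
  have "\<one> \<in> cent G y" using y unfolding cent_def by simp
  then show "cent G y \<noteq> {}" by blast
  fix a assume a: "a \<in> cent G y"
  then have ac: "a \<in> carrier G" and ay: "a \<otimes> y = y \<otimes> a" unfolding cent_def by auto
  show "inv a \<in> cent G y" using comm_inv[OF ac y ay] ac unfolding cent_def by simp
  fix b assume b: "b \<in> cent G y"
  then have bc: "b \<in> carrier G" and "b \<otimes> y = y \<otimes> b" unfolding cent_def by auto
  then show "a \<otimes> b \<in> cent G y" using comm_mult[OF ac bc y ay] ac unfolding cent_def by simp
qed

lemma subgroup_ctr: "subgroup (ctr G) G"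
proof (rule subgroupI)
  show "ctr G \<subseteq> carrier G" unfolding ctr_def by auto
  have "\<one> \<in> ctr G" unfolding ctr_def by simp
  then show "ctr G \<noteq> {}" by blast
  fix a assume a: "a \<in> ctr G"
  then have ac: "a \<in> carrier G" and ay: "\<And>y. y \<in> carrier G \<Longrightarrow> a \<otimes> y = y \<otimes> a" unfolding ctr_def by auto
  show "inv a \<in> ctr G" using comm_inv[OF ac _ ay] ac unfolding ctr_def by simp
  fix b assume b: "b \<in> ctr G"
  then have bc: "b \<in> carrier G" and by': "\<And>y. y \<in> carrier G \<Longrightarrow> b \<otimes> y = y \<otimes> b" unfolding ctr_def by auto
  show "a \<otimes> b \<in> ctr G" using comm_mult[OF ac bc _ ay by'] ac bc unfolding ctr_def by simp
qed

lemma ctr_sub_cent: "y \<in> carrier G \<Longrightarrow> ctr G \<subseteq> cent G y"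
  unfolding ctr_def cent_def by auto

lemma cent_ctr: "y \<in> ctr G \<Longrightarrow> cent G y = carrier G"
  unfolding ctr_def cent_def by auto

lemma cent_not_ctr: "y \<in> carrier G \<Longrightarrow> y \<notin> ctr G \<Longrightarrow> \<exists>g\<in>carrier G. g \<notin> cent G y"
  unfolding ctr_def cent_def by auto metis

lemma lcos_ctr: "a \<in> carrier G \<Longrightarrow> l_coset G a (ctr G) = ctr G #> a"
  unfolding l_coset_def r_coset_def ctr_def by auto

lemma cent_shift:
  assumes y: "y \<in> carrier G" and z: "z \<in> ctr G"
  shows "cent G (y \<otimes> z) = cent G y"
proof -
  have zc: "z \<in> carrier G" and zx: "\<And>x. x \<in> carrier G \<Longrightarrow> z \<otimes> x = x \<otimes> z"
    using z unfolding ctr_def by auto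
  have "x \<otimes> (y \<otimes> z) = (y \<otimes> z) \<otimes> x \<longleftrightarrow> x \<otimes> y = y \<otimes> x" if x: "x \<in> carrier G" for x
  proof -
    have "x \<otimes> (y \<otimes> z) = (x \<otimes> y) \<otimes> z" using x y zc by (simp add: m_assoc)
    moreover have "(y \<otimes> z) \<otimes> x = (y \<otimes> x) \<otimes> z" using x y zc zx[OF x] by (simp add: m_assoc)
    ultimately show ?thesis using x y zc right_cancel[of z "x \<otimes> y" "y \<otimes> x"] by simp
  qed
  then show ?thesis unfolding cent_def by auto
qed

lemma cent_coset:
  assumes c: "c \<in> lcosets (ctr G)" and y: "y \<in> c"
  shows "cent G y = cent G (rep (ctr G) c)"
proof -
  note r = rep[OF c]
  then obtain z where z: "z \<in> ctr G" "y = rep (ctr G) c \<otimes> z"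
    using y unfolding l_coset_def by auto
  then show ?thesis using cent_shift[OF r(1) z(1)] by simp
qed

end

context gmean begin

lemma m01: "(\<And>x. 0 \<le> f x \<and> f x \<le> 1) \<Longrightarrow> 0 \<le> m f \<and> m f \<le> 1"
proof -
  assume b: "\<And>x. 0 \<le> f x \<and> f x \<le> 1"
  have fl: "f \<in> linfty G" by (rule linftyI[where B=1]) (use b in \<open>auto simp: abs_le_iff\<close>)
  have "0 \<le> m f" using b fl by (intro m_nonneg) auto
  moreover have "m f \<le> m (\<lambda>x. 1)" using b fl by (intro m_mono) auto
  ultimately show ?thesis using m_one by simp
qed

lemma psi_linfty: "(\<lambda>y. m (indf (S y))) \<in> linfty G"
  by (rule linftyI[where B=1]) (use m_ind_ge0 m_ind_le1 in \<open>auto simp: abs_le_iff\<close>)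

lemma dc_eq: "dc_mean G m = m (\<lambda>y. m (indf (cent G y)))"
  unfolding dc_mean_def
proof (rule m_cong)
  show "(\<lambda>y. m (\<lambda>x. if x \<otimes> y = y \<otimes> x then 1 else 0)) \<in> linfty G"
    by (rule linftyI[where B=1]) (use m01 in \<open>force simp: abs_le_iff\<close>)
  show "(\<lambda>y. m (indf (cent G y))) \<in> linfty G" by (rule psi_linfty)
  fix y assume y: "y \<in> carrier G"
  show "m (\<lambda>x. if x \<otimes> y = y \<otimes> x then 1 else 0) = m (indf (cent G y))"
    by (rule m_cong) (auto simp: indf_def cent_def linftyI[where B=1])
qed

lemma m_ind_proper:
  assumes H: "subgroup H G" and g: "g \<in> carrier G" "g \<notin> H"
  shows "m (indf H) \<le> 1/2"
proof -
  have Hc: "H \<subseteq> carrier G" using subgroup.subset[OF H] .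
  have dis: "x \<in> H \<Longrightarrow> x \<in> l_coset G g H \<Longrightarrow> False" for x
  proof -
    assume x: "x \<in> H" "x \<in> l_coset G g H"
    then obtain h where h: "h \<in> H" "x = g \<otimes> h" unfolding l_coset_def by auto
    have hc: "h \<in> carrier G" using h Hc by auto
    have "g = x \<otimes> inv h" using h hc g by (simp add: m_assoc)
    moreover have "x \<otimes> inv h \<in> H"
      using subgroup.m_closed[OF H x(1) subgroup.m_inv_closed[OF H h(1)]] .
    ultimately show False using g by simp
  qed
  have "m (\<lambda>x. indf H x + indf (l_coset G g H) x) \<le> m (\<lambda>x. 1)"
    using dis by (intro m_mono linfty_add linfty_indf) (auto simp: indf_def)
  then have "m (indf H) + m (indf (l_coset G g H)) \<le> 1" using m_add m_one by simp
  then show ?thesis using m_ind_transl[OF Hc g(1)] by simp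
qed

end




lemma (in group) gmeanI: "fa_left_inv_mean G m \<Longrightarrow> gmean G m"
  by (simp add: gmean_def gmean_axioms_def is_group)

lemma (in gmean) cent_fin_of_mean:
  assumes y: "y \<in> carrier G" and e: "0 < \<epsilon>" and le: "\<epsilon> \<le> m (indf (cent G y))"
  shows "finite (lcosets (cent G y)) \<and> real (card (lcosets (cent G y))) \<le> 1/\<epsilon>"
proof -
  have H: "subgroup (cent G y) G" using subgroup_cent[OF y] .
  have Hc: "cent G y \<subseteq> carrier G" using subgroup.subset[OF H] .
  obtain F where F: "finite F" "F \<subseteq> carrier G"
    and cov: "\<forall>g\<in>carrier G. \<exists>f\<in>F. \<exists>a\<in>cent G y. \<exists>b\<in>cent G y. g = f \<otimes> (a \<otimes> inv b)"
    using cover_from_mean[OF Hc] e le by force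
  have "carrier G \<subseteq> (\<Union>f\<in>F. l_coset G f (cent G y))"
  proof
    fix g assume "g \<in> carrier G"
    then obtain f a b where fab: "f \<in> F" "a \<in> cent G y" "b \<in> cent G y" "g = f \<otimes> (a \<otimes> inv b)"
      using cov by blast
    have "a \<otimes> inv b \<in> cent G y"
      using subgroup.m_closed[OF H fab(2) subgroup.m_inv_closed[OF H fab(3)]] .
    then show "g \<in> (\<Union>f\<in>F. l_coset G f (cent G y))" using fab unfolding l_coset_def by blast
  qed
  then have fin: "finite (lcosets (cent G y))" using lcosets_finite_cover[OF H F] by blast
  define c where "c = real (card (lcosets (cent G y)))"
  have c1: "c * m (indf (cent G y)) = 1" using mean_lcosets[OF H fin] c_def by simp
  have "c * \<epsilon> \<le> c * m (indf (cent G y))" using le c_def by (intro mult_left_mono) auto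
  then have "c * \<epsilon> \<le> 1" using c1 by simp
  then have "c \<le> 1/\<epsilon>" using e by (simp add: le_divide_eq)
  then show ?thesis using fin c_def by simp
qed

lemma (in group) part1:
  assumes m: "fa_left_inv_mean G m" and m': "fa_left_inv_mean G m'" and pos: "0 < dc_mean G m'"
  shows "0 < dc_mean G m"
proof -
  interpret M: gmean G m by (rule gmeanI[OF m])
  interpret M': gmean G m' by (rule gmeanI[OF m'])
  define \<psi>' where "\<psi>' y = m' (indf (cent G y))" for y
  have d: "m' \<psi>' = dc_mean G m'" unfolding \<psi>'_def using M'.dc_eq by simp
  define \<epsilon> where "\<epsilon> = m' \<psi>' / 2"
  have epos: "0 < \<epsilon>" using pos d \<epsilon>_def by simp
  define X where "X = {y \<in> carrier G. \<epsilon> \<le> \<psi>' y}"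
  have "m' \<psi>' \<le> m' (\<lambda>y. indf X y + \<epsilon>)"
  proof (rule M'.m_mono)
    show "\<psi>' \<in> linfty G" unfolding \<psi>'_def by (rule M'.psi_linfty)
    show "(\<lambda>y. indf X y + \<epsilon>) \<in> linfty G" by (rule linfty_add) simp_all
    fix y assume y: "y \<in> carrier G"
    show "\<psi>' y \<le> indf X y + \<epsilon>"
      using M'.m_ind_le1[of "cent G y"] y epos unfolding X_def indf_def \<psi>'_def by auto
  qed
  also have "\<dots> = m' (indf X) + \<epsilon>" using M'.m_add[of "indf X" "\<lambda>y. \<epsilon>"] M'.m_const by simp
  finally have mX: "\<epsilon> \<le> m' (indf X)" using \<epsilon>_def by simp
  have Xc: "X \<subseteq> carrier G" unfolding X_def by auto
  obtain F where F: "finite F" "F \<subseteq> carrier G"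
    and cov: "\<forall>g\<in>carrier G. \<exists>f\<in>F. \<exists>a\<in>X. \<exists>b\<in>X. g = f \<otimes> (a \<otimes> inv b)"
    using M'.cover_from_mean[OF Xc] mX epos by force
  have fin: "finite (lcosets (cent G y)) \<and> real (card (lcosets (cent G y))) \<le> 1/\<epsilon>" if y: "y \<in> X" for y
    using M'.cent_fin_of_mean[of y \<epsilon>] y epos unfolding X_def \<psi>'_def by auto
  have Yd: "\<epsilon>*\<epsilon> \<le> m (indf (cent G (a \<otimes> inv b)))" if a: "a \<in> X" and b: "b \<in> X" for a b
  proof -
    have ac: "a \<in> carrier G" "b \<in> carrier G" using a b Xc by auto
    have sa: "subgroup (cent G a) G" "subgroup (cent G b) G" using subgroup_cent ac by auto
    have sd: "subgroup (cent G (a \<otimes> inv b)) G" using subgroup_cent ac by simp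
    have sub: "cent G a \<inter> cent G b \<subseteq> cent G (a \<otimes> inv b)"
    proof
      fix x assume x: "x \<in> cent G a \<inter> cent G b"
      then have xc: "x \<in> carrier G" and xa: "x \<otimes> a = a \<otimes> x" and xb: "x \<otimes> b = b \<otimes> x"
        unfolding cent_def by auto
      have "inv b \<otimes> x = x \<otimes> inv b" using comm_inv[OF ac(2) xc] xb by simp
      then have "(a \<otimes> inv b) \<otimes> x = x \<otimes> (a \<otimes> inv b)"
        using comm_mult[OF ac(1) inv_closed[OF ac(2)] xc] xa by simp
      then show "x \<in> cent G (a \<otimes> inv b)" using xc unfolding cent_def by simp
    qed
    note fa = fin[OF a] and fb = fin[OF b]
    have si: "subgroup (cent G a \<inter> cent G b) G" using sa by (rule subgroups_Inter_pair)
    have fi: "finite (lcosets (cent G a \<inter> cent G b)) \<and> card (lcosets (cent G a \<inter> cent G b)) \<le> card (lcosets (cent G a)) * card (lcosets (cent G b))"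
      using lcosets_inter[OF sa] fa fb by auto
    then have fd0: "finite (lcosets (cent G (a \<otimes> inv b))) \<and> card (lcosets (cent G (a \<otimes> inv b))) \<le> card (lcosets (cent G a \<inter> cent G b))"
      using lcosets_mono[OF si sd sub] by auto
    define k where "k = card (lcosets (cent G (a \<otimes> inv b)))"
    have "k \<le> card (lcosets (cent G a)) * card (lcosets (cent G b))" using fd0 fi k_def by linarith
    then have "real k \<le> real (card (lcosets (cent G a))) * real (card (lcosets (cent G b)))"
      by (metis of_nat_le_iff of_nat_mult)
    also have "\<dots> \<le> (1/\<epsilon>) * (1/\<epsilon>)" using fa fb epos by (intro mult_mono) auto
    finally have kle: "real k * (\<epsilon> * \<epsilon>) \<le> 1" using epos by (simp add: field_simps)
    have km: "real k * m (indf (cent G (a \<otimes> inv b))) = 1" using M.mean_lcosets[OF sd] fd0 k_def by auto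
    then have kpos: "0 < real k" by (cases k) auto
    have "real k * (\<epsilon> * \<epsilon>) \<le> real k * m (indf (cent G (a \<otimes> inv b)))" using kle km by simp
    then show ?thesis using kpos by simp
  qed
  define Y where "Y = {y \<in> carrier G. \<epsilon>*\<epsilon> \<le> m (indf (cent G y))}"
  have Yc: "Y \<subseteq> carrier G" by (auto simp: Y_def)
  have "carrier G \<subseteq> (\<Union>f\<in>F. l_coset G f Y)"
  proof
    fix g assume "g \<in> carrier G"
    then obtain f a b where fab: "f \<in> F" "a \<in> X" "b \<in> X" "g = f \<otimes> (a \<otimes> inv b)" using cov by blast
    have "a \<otimes> inv b \<in> Y" using Yd[OF fab(2,3)] fab Xc unfolding Y_def by auto
    then show "g \<in> (\<Union>f\<in>F. l_coset G f Y)" using fab unfolding l_coset_def by blast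
  qed
  then have "1 \<le> real (card F) * m (indf Y)" using M.cover_mean[OF Yc F] by blast
  then have mY: "0 < m (indf Y)" using M.m_ind_ge0[of Y] by (cases "m (indf Y) = 0") auto
  have "m (\<lambda>y. \<epsilon>*\<epsilon> * indf Y y) \<le> m (\<lambda>y. m (indf (cent G y)))"
  proof (rule M.m_mono)
    show "(\<lambda>y. \<epsilon>*\<epsilon> * indf Y y) \<in> linfty G" by (intro linfty_scale linfty_indf)
    show "(\<lambda>y. m (indf (cent G y))) \<in> linfty G" by (rule M.psi_linfty)
    fix y assume "y \<in> carrier G"
    then show "\<epsilon>*\<epsilon> * indf Y y \<le> m (indf (cent G y))"
      using M.m_ind_ge0[of "cent G y"] unfolding Y_def indf_def by auto
  qed
  then have "\<epsilon>*\<epsilon> * m (indf Y) \<le> dc_mean G m" using M.m_scale[of "indf Y" "\<epsilon>*\<epsilon>"] M.dc_eq by simp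
  moreover have "0 < \<epsilon>*\<epsilon> * m (indf Y)" using epos mY by simp
  ultimately show ?thesis by linarith
qed




lemma inv_from_prod: "real k * v = 1 \<Longrightarrow> v = 1 / real k"
  by (cases "k = 0") (auto simp: field_simps)

lemma inv_index_01: "0 \<le> inv_index G H \<and> inv_index G H \<le> 1"
  unfolding inv_index_def by (cases "card (rcosets\<^bsub>G\<^esub> H)") auto

lemma (in group) inv_index_proper:
  assumes H: "subgroup H G" and g: "g \<in> carrier G" "g \<notin> H"
  shows "inv_index G H \<le> 1/2"
proof (cases "finite (rcosets H)")
  case True
  have Hc: "H \<subseteq> carrier G" using subgroup.subset[OF H] .
  have "H #> \<one> \<in> rcosets H" unfolding RCOSETS_def by blast
  then have h1: "H \<in> rcosets H" using coset_mult_one[OF Hc] by simp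
  have h2: "H #> g \<in> rcosets H" using g unfolding RCOSETS_def by blast
  have "g \<in> H #> g" using rcos_self[OF g(1) H] .
  then have ne: "H #> g \<noteq> H" using g by auto
  have "card {H, H #> g} \<le> card (rcosets H)" using h1 h2 True by (intro card_mono) auto
  then have "2 \<le> card (rcosets H)" using ne by simp
  then have "2 \<le> real (card (rcosets H))" by simp
  then show ?thesis using True unfolding inv_index_def by (simp add: divide_simps)
next
  case False
  then show ?thesis unfolding inv_index_def by simp
qed

lemma (in group) sum_lcosets_pt:
  assumes K: "subgroup K G" and fin: "finite (lcosets K)"
    and y: "y \<in> carrier G" and c0: "c0 \<in> lcosets K" "y \<in> c0"
  shows "(\<Sum>c\<in>lcosets K. a c * indf c y) = a c0"
proof -
  have "(\<Sum>c\<in>lcosets K. a c * indf c y) = (\<Sum>c\<in>lcosets K. if c = c0 then a c else 0)"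
  proof (rule sum.cong)
    fix c assume c: "c \<in> lcosets K"
    show "a c * indf c y = (if c = c0 then a c else 0)"
    proof (cases "c = c0")
      case True then show ?thesis using c0 by (simp add: indf_def)
    next
      case False
      then have "c \<inter> c0 = {}" using lcos_disjoint[OF K c c0(1)] by simp
      then show ?thesis using False c0 by (auto simp: indf_def)
    qed
  qed simp
  also have "\<dots> = a c0" using c0 fin by simp
  finally show ?thesis .
qed

lemma (in group) cent_lcosets:
  assumes fin: "finite (lcosets (ctr G))" and y: "y \<in> carrier G"
  shows "finite (lcosets (cent G y)) \<and> inv_index G (cent G y) = 1 / real (card (lcosets (cent G y)))"
proof -
  have "finite (lcosets (cent G y))"
    using lcosets_mono[OF subgroup_ctr subgroup_cent[OF y] ctr_sub_cent[OF y] fin] by blast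
  then show ?thesis using inv_index_lcosets[OF subgroup_cent[OF y]] by simp
qed

lemma (in group) phi_decomp:
  assumes fin: "finite (lcosets (ctr G))" and y: "y \<in> carrier G"
  shows "inv_index G (cent G y) = (\<Sum>c\<in>lcosets (ctr G). inv_index G (cent G (rep (ctr G) c)) * indf c y)"
proof -
  obtain c0 where c0: "c0 \<in> lcosets (ctr G)" "y \<in> c0"
    using lcosets_part_G[OF subgroup_ctr] y by blast
  show ?thesis
    using sum_lcosets_pt[OF subgroup_ctr fin y c0, of "\<lambda>c. inv_index G (cent G (rep (ctr G) c))"]
      cent_coset[OF c0] by simp
qed

lemma (in group) part2_mean:
  assumes fin: "finite (lcosets (ctr G))" and m: "fa_left_inv_mean G m"
  shows "dc_mean G m = (\<Sum>c\<in>lcosets (ctr G). inv_index G (cent G (rep (ctr G) c))) / real (card (lcosets (ctr G)))"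
proof -
  interpret M: gmean G m by (rule gmeanI[OF m])
  define \<phi> where "\<phi> y = inv_index G (cent G y)" for y
  define L where "L = lcosets (ctr G)"
  define n where "n = real (card L)"
  have Zc: "ctr G \<subseteq> carrier G" using subgroup.subset[OF subgroup_ctr] .
  have phil: "\<phi> \<in> linfty G"
  proof (rule linftyI[where B=1])
    fix x show "\<bar>\<phi> x\<bar> \<le> 1" using inv_index_01[of G "cent G x"] unfolding \<phi>_def by auto
  qed
  have "dc_mean G m = m (\<lambda>y. m (indf (cent G y)))" by (rule M.dc_eq)
  also have "\<dots> = m \<phi>"
  proof (rule M.m_cong)
    show "(\<lambda>y. m (indf (cent G y))) \<in> linfty G" by (rule M.psi_linfty)
    show "\<phi> \<in> linfty G" by (rule phil)
    fix y assume y: "y \<in> carrier G"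
    note cl = cent_lcosets[OF fin y]
    have "real (card (lcosets (cent G y))) * m (indf (cent G y)) = 1"
      using M.mean_lcosets[OF subgroup_cent[OF y]] cl by blast
    then have "m (indf (cent G y)) = 1 / real (card (lcosets (cent G y)))"
      by (rule inv_from_prod)
    then show "m (indf (cent G y)) = \<phi> y" using cl unfolding \<phi>_def by simp
  qed
  also have "\<dots> = m (\<lambda>y. \<Sum>c\<in>L. \<phi> (rep (ctr G) c) * indf c y)"
  proof (rule M.m_cong)
    show "\<phi> \<in> linfty G" by (rule phil)
    show "(\<lambda>y. \<Sum>c\<in>L. \<phi> (rep (ctr G) c) * indf c y) \<in> linfty G"
      using fin unfolding L_def by (intro linfty_sum linfty_scale linfty_indf) auto
    fix y assume y: "y \<in> carrier G"
    show "\<phi> y = (\<Sum>c\<in>L. \<phi> (rep (ctr G) c) * indf c y)"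
      using phi_decomp[OF fin y] unfolding \<phi>_def L_def by simp
  qed
  also have "\<dots> = (\<Sum>c\<in>L. m (\<lambda>y. \<phi> (rep (ctr G) c) * indf c y))"
    using fin unfolding L_def by (intro M.m_sum linfty_scale linfty_indf) auto
  also have "\<dots> = (\<Sum>c\<in>L. \<phi> (rep (ctr G) c) * m (indf (ctr G)))"
  proof (rule sum.cong)
    fix c assume c: "c \<in> L"
    have "m (indf c) = m (indf (ctr G))"
      using rep[OF c[unfolded L_def]] M.m_ind_transl[OF Zc] by metis
    then show "m (\<lambda>y. \<phi> (rep (ctr G) c) * indf c y) = \<phi> (rep (ctr G) c) * m (indf (ctr G))"
      using M.m_scale[OF linfty_indf] by simp
  qed simp
  also have "\<dots> = (\<Sum>c\<in>L. \<phi> (rep (ctr G) c)) * m (indf (ctr G))"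
    by (simp add: sum_distrib_right)
  also have "m (indf (ctr G)) = 1 / n"
    using inv_from_prod[OF M.mean_lcosets[OF subgroup_ctr fin]] unfolding n_def L_def by simp
  finally show ?thesis unfolding \<phi>_def L_def n_def by simp
qed




lemma pair_prob:
  "measure_pmf.prob (pair_pmf p q) A = measure_pmf.expectation p (\<lambda>x. measure_pmf.prob q {y. (x,y) \<in> A})"
proof -
  have i: "(\<integral>\<^sup>+y. indicator A (x,y) \<partial>q) = emeasure (measure_pmf q) {y. (x,y)\<in>A}" for x
  proof -
    have "(\<integral>\<^sup>+y. indicator A (x,y) \<partial>q) = (\<integral>\<^sup>+y. indicator {y. (x,y)\<in>A} y \<partial>q)"
      by (auto intro!: nn_integral_cong simp: indicator_def)
    then show ?thesis by simp
  qed
  have "emeasure (measure_pmf (pair_pmf p q)) A = (\<integral>\<^sup>+x. emeasure (measure_pmf q) {y. (x,y) \<in> A} \<partial>p)"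
    unfolding pair_pmf_def emeasure_bind_pmf
    by (intro nn_integral_cong) (simp add: i)
  also have "\<dots> = (\<integral>\<^sup>+x. ennreal (measure_pmf.prob q {y. (x,y) \<in> A}) \<partial>p)"
    by (simp add: measure_pmf.emeasure_eq_measure)
  also have "\<dots> = ennreal (measure_pmf.expectation p (\<lambda>x. measure_pmf.prob q {y. (x,y) \<in> A}))"
    by (intro nn_integral_eq_integral measure_pmf.integrable_const_bound[where B=1]) auto
  finally show ?thesis
    by (simp add: measure_pmf.emeasure_eq_measure)
qed

lemma (in group) fin_from_mean:
  assumes m: "fa_left_inv_mean G m" and dc: "1/2 < dc_mean G m"
  shows "finite (lcosets (ctr G))"
proof -
  interpret M: gmean G m by (rule gmeanI[OF m])
  have Zc: "ctr G \<subseteq> carrier G" using subgroup.subset[OF subgroup_ctr] .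
  have "m (\<lambda>y. m (indf (cent G y))) \<le> m (\<lambda>y. 1/2 + 1/2 * indf (ctr G) y)"
  proof (rule M.m_mono)
    show "(\<lambda>y. m (indf (cent G y))) \<in> linfty G" by (rule M.psi_linfty)
    show "(\<lambda>y. 1/2 + 1/2 * indf (ctr G) y) \<in> linfty G"
      by (intro linfty_add linfty_scale linfty_indf linfty_const)
    fix y assume y: "y \<in> carrier G"
    show "m (indf (cent G y)) \<le> 1/2 + 1/2 * indf (ctr G) y"
    proof (cases "y \<in> ctr G")
      case True then show ?thesis using M.m_ind_le1[of "cent G y"] by (simp add: indf_def)
    next
      case False
      then obtain g where "g \<in> carrier G" "g \<notin> cent G y" using cent_not_ctr[OF y] by blast
      then have "m (indf (cent G y)) \<le> 1/2" using M.m_ind_proper[OF subgroup_cent[OF y]] by blast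
      then show ?thesis using False by (simp add: indf_def)
    qed
  qed
  also have "\<dots> = m (\<lambda>y. 1/2) + m (\<lambda>y. 1/2 * indf (ctr G) y)"
    by (rule M.m_add[OF linfty_const linfty_scale[OF linfty_indf]])
  also have "m (\<lambda>y. 1/2 * indf (ctr G) y) = 1/2 * m (indf (ctr G))"
    by (rule M.m_scale[OF linfty_indf])
  also have "m (\<lambda>y. 1/2) = 1/2" by (rule M.m_const)
  finally have "0 < m (indf (ctr G))" using dc M.dc_eq by simp
  then obtain F where F: "finite F" "F \<subseteq> carrier G"
    and cov: "\<forall>g\<in>carrier G. \<exists>f\<in>F. \<exists>a\<in>ctr G. \<exists>b\<in>ctr G. g = f \<otimes> (a \<otimes> inv b)"
    using M.cover_from_mean[OF Zc] by force
  have "carrier G \<subseteq> (\<Union>f\<in>F. l_coset G f (ctr G))"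
  proof
    fix g assume "g \<in> carrier G"
    then obtain f a b where fab: "f \<in> F" "a \<in> ctr G" "b \<in> ctr G" "g = f \<otimes> (a \<otimes> inv b)"
      using cov by blast
    have "a \<otimes> inv b \<in> ctr G"
      using subgroup.m_closed[OF subgroup_ctr fab(2) subgroup.m_inv_closed[OF subgroup_ctr fab(3)]] .
    then show "g \<in> (\<Union>f\<in>F. l_coset G f (ctr G))" using fab unfolding l_coset_def by blast
  qed
  then show ?thesis using lcosets_finite_cover[OF subgroup_ctr F] by blast
qed

lemma (in group) comm_prob_int:
  assumes p: "set_pmf p \<subseteq> carrier G"
  shows "comm_prob G p = measure_pmf.expectation p (\<lambda>x. measure_pmf.prob p (cent G x))"
  unfolding comm_prob_def pair_prob
proof (rule integral_cong_AE)
  show "AE x in measure_pmf p. measure_pmf.prob p {y. (x, y) \<in> {(x, y). x \<otimes> y = y \<otimes> x}} =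
      measure_pmf.prob p (cent G x)"
  proof (rule AE_pmfI)
    fix x assume x: "x \<in> set_pmf p"
    have "{y. (x, y) \<in> {(x, y). x \<otimes> y = y \<otimes> x}} \<inter> set_pmf p = cent G x \<inter> set_pmf p"
      using p unfolding cent_def by auto
    then show "measure_pmf.prob p {y. (x, y) \<in> {(x, y). x \<otimes> y = y \<otimes> x}} = measure_pmf.prob p (cent G x)"
      by (metis measure_Int_set_pmf)
  qed
qed simp_all

lemma indf_indicator: "indf S = indicator S"
  by (auto simp: indf_def indicator_def fun_eq_iff)

lemma (in group) unif:
  assumes M: "measures_index_uniformly G M" and e: "0 < e"
  shows "\<exists>N. \<forall>k\<ge>N. (\<forall>x\<in>carrier G. \<bar>measure_pmf.prob (M k) (cent G x) - inv_index G (cent G x)\<bar> < e) \<and>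
     (\<forall>c\<in>lcosets (ctr G). \<bar>measure_pmf.prob (M k) c - inv_index G (ctr G)\<bar> < e)"
proof -
  obtain N where N: "\<forall>k\<ge>N. \<forall>H. subgroup H G \<longrightarrow> (\<forall>x\<in>carrier G.
         \<bar>measure_pmf.prob (M k) (l_coset G x H) - inv_index G H\<bar> < e)"
    using M e unfolding measures_index_uniformly_def by blast
  have "(\<forall>x\<in>carrier G. \<bar>measure_pmf.prob (M k) (cent G x) - inv_index G (cent G x)\<bar> < e) \<and>
     (\<forall>c\<in>lcosets (ctr G). \<bar>measure_pmf.prob (M k) c - inv_index G (ctr G)\<bar> < e)" if k: "k \<ge> N" for k
  proof (intro conjI ballI)
    fix x assume x: "x \<in> carrier G"
    have "l_coset G \<one> (cent G x) = cent G x"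
      using lcos_mult_one subgroup.subset[OF subgroup_cent[OF x]] by blast
    then show "\<bar>measure_pmf.prob (M k) (cent G x) - inv_index G (cent G x)\<bar> < e"
      using N k subgroup_cent[OF x] one_closed by metis
  next
    fix c assume c: "c \<in> lcosets (ctr G)"
    then show "\<bar>measure_pmf.prob (M k) c - inv_index G (ctr G)\<bar> < e"
      using N k subgroup_ctr rep[OF c] by metis
  qed
  then show ?thesis by blast
qed




lemma (in group) part2_seq:
  assumes fin: "finite (lcosets (ctr G))" and M: "measures_index_uniformly G M"
  shows "(\<lambda>k. comm_prob G (M k)) \<longlonglongrightarrow>
    (\<Sum>c\<in>lcosets (ctr G). inv_index G (cent G (rep (ctr G) c))) / real (card (lcosets (ctr G)))"
proof (rule LIMSEQ_I)
  define L where "L = lcosets (ctr G)"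
  define n where "n = real (card L)"
  define \<phi> where "\<phi> y = inv_index G (cent G y)" for y
  define a where "a c = \<phi> (rep (ctr G) c)" for c
  have sp: "set_pmf (M k) \<subseteq> carrier G" for k using M unfolding measures_index_uniformly_def by blast
  have iz: "inv_index G (ctr G) = 1 / n"
    using inv_index_lcosets[OF subgroup_ctr] fin unfolding n_def L_def by simp
  have a01: "0 \<le> a c \<and> a c \<le> 1" for c using inv_index_01 unfolding a_def \<phi>_def by blast
  have phi01: "0 \<le> \<phi> x \<and> \<phi> x \<le> 1" for x using inv_index_01 unfolding \<phi>_def by blast
  fix r :: real assume r: "0 < r"
  define e where "e = r / (n + 2)"
  have n0: "0 \<le> n" unfolding n_def by simp
  have e: "0 < e" unfolding e_def using r n0 by simp
  have ne: "(n + 2) * e = r" unfolding e_def using n0 by simp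
  obtain N where N: "\<forall>k\<ge>N. (\<forall>x\<in>carrier G. \<bar>measure_pmf.prob (M k) (cent G x) - \<phi> x\<bar> < e) \<and>
      (\<forall>c\<in>L. \<bar>measure_pmf.prob (M k) c - 1/n\<bar> < e)"
    using unif[OF M e] iz unfolding \<phi>_def L_def by auto
  have "norm (comm_prob G (M k) - (\<Sum>c\<in>L. a c) / n) < r" if k: "k \<ge> N" for k
  proof -
    define p where "p = M k"
    have pc: "set_pmf p \<subseteq> carrier G" using sp unfolding p_def .
    have N1: "\<forall>x\<in>carrier G. \<bar>measure_pmf.prob p (cent G x) - \<phi> x\<bar> < e"
      and N2: "\<forall>c\<in>L. \<bar>measure_pmf.prob p c - 1/n\<bar> < e" using N k unfolding p_def by auto
    define f where "f x = measure_pmf.prob p (cent G x)" for x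
    have intf: "integrable p f"
      by (rule measure_pmf.integrable_const_bound[where B=1]) (auto simp: f_def)
    have intphi: "integrable p \<phi>"
      by (rule measure_pmf.integrable_const_bound[where B=1]) (use phi01 in auto)
    have cp: "comm_prob G p = measure_pmf.expectation p f" using comm_prob_int[OF pc] unfolding f_def by simp
    have A1: "measure_pmf.expectation p f \<le> measure_pmf.expectation p \<phi> + e"
    proof -
      have "measure_pmf.expectation p f \<le> measure_pmf.expectation p (\<lambda>x. \<phi> x + e)"
      proof (rule integral_mono_AE)
        show "integrable p (\<lambda>x. \<phi> x + e)" using intphi by simp
        show "AE x in measure_pmf p. f x \<le> \<phi> x + e"
        proof (rule AE_pmfI)
          fix x assume "x \<in> set_pmf p"
          then have "x \<in> carrier G" using pc by blast
          then show "f x \<le> \<phi> x + e" using N1 unfolding f_def by force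
        qed
      qed (rule intf)
      also have "\<dots> = measure_pmf.expectation p \<phi> + e" using intphi by simp
      finally show ?thesis .
    qed
    have A2: "measure_pmf.expectation p \<phi> \<le> measure_pmf.expectation p f + e"
    proof -
      have "measure_pmf.expectation p \<phi> \<le> measure_pmf.expectation p (\<lambda>x. f x + e)"
      proof (rule integral_mono_AE)
        show "integrable p (\<lambda>x. f x + e)" using intf by simp
        show "AE x in measure_pmf p. \<phi> x \<le> f x + e"
        proof (rule AE_pmfI)
          fix x assume "x \<in> set_pmf p"
          then have "x \<in> carrier G" using pc by blast
          then show "\<phi> x \<le> f x + e" using N1 unfolding f_def by force
        qed
      qed (rule intphi)
      also have "\<dots> = measure_pmf.expectation p f + e" using intf by simp
      finally show ?thesis .
    qed
    have B: "measure_pmf.expectation p \<phi> = (\<Sum>c\<in>L. a c * measure_pmf.prob p c)"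
    proof -
      have "measure_pmf.expectation p \<phi> = measure_pmf.expectation p (\<lambda>x. \<Sum>c\<in>L. a c * indicator c x)"
      proof (rule integral_cong_AE)
        show "AE x in measure_pmf p. \<phi> x = (\<Sum>c\<in>L. a c * indicator c x)"
        proof (rule AE_pmfI)
          fix x assume "x \<in> set_pmf p"
          then have "x \<in> carrier G" using pc by blast
          then show "\<phi> x = (\<Sum>c\<in>L. a c * indicator c x)"
            using phi_decomp[OF fin] unfolding \<phi>_def a_def L_def indf_indicator by simp
        qed
      qed simp_all
      also have "\<dots> = (\<Sum>c\<in>L. measure_pmf.expectation p (\<lambda>x. a c * indicator c x))"
      proof (rule Bochner_Integration.integral_sum)
        fix c show "integrable p (\<lambda>x. a c * indicator c x)"
          by (rule measure_pmf.integrable_const_bound[where B="\<bar>a c\<bar>"]) (auto simp: indicator_def)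
      qed
      also have "\<dots> = (\<Sum>c\<in>L. a c * measure_pmf.prob p c)"
        by (intro sum.cong refl) simp
      finally show ?thesis .
    qed
    have C: "\<bar>(\<Sum>c\<in>L. a c * measure_pmf.prob p c) - (\<Sum>c\<in>L. a c) / n\<bar> \<le> n * e"
    proof -
      have eq: "(\<Sum>c\<in>L. a c * measure_pmf.prob p c) - (\<Sum>c\<in>L. a c) / n =
          (\<Sum>c\<in>L. a c * (measure_pmf.prob p c - 1/n))"
        by (simp add: sum_subtractf right_diff_distrib sum_divide_distrib)
      have "\<bar>\<Sum>c\<in>L. a c * (measure_pmf.prob p c - 1/n)\<bar> \<le> (\<Sum>c\<in>L. \<bar>a c * (measure_pmf.prob p c - 1/n)\<bar>)"
        by (rule sum_abs)
      also have "\<dots> \<le> (\<Sum>c\<in>L. e)"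
      proof (rule sum_mono)
        fix c assume c: "c \<in> L"
        have "\<bar>a c * (measure_pmf.prob p c - 1/n)\<bar> = \<bar>a c\<bar> * \<bar>measure_pmf.prob p c - 1/n\<bar>"
          by (rule abs_mult)
        also have "\<dots> \<le> 1 * e" using a01[of c] N2 c by (intro mult_mono) auto
        finally show "\<bar>a c * (measure_pmf.prob p c - 1/n)\<bar> \<le> e" by simp
      qed
      also have "\<dots> = n * e" by (simp add: n_def)
      finally show ?thesis using eq by simp
    qed
    have "\<bar>comm_prob G p - (\<Sum>c\<in>L. a c) / n\<bar> \<le> e + n * e" using A1 A2 B C cp by linarith
    also have "\<dots> < (n + 2) * e" using e by (simp add: distrib_right)
    finally show ?thesis using ne unfolding p_def by simp
  qed
  then show "\<exists>no. \<forall>k\<ge>no. norm (comm_prob G (M k) -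
      (\<Sum>c\<in>lcosets (ctr G). inv_index G (cent G (rep (ctr G) c))) / real (card (lcosets (ctr G)))) < r"
    unfolding a_def \<phi>_def L_def n_def by blast
qed

lemma (in group) seq_infinite:
  assumes inf: "infinite (lcosets (ctr G))" and M: "measures_index_uniformly G M" and e: "0 < e"
  shows "dc_seq G M \<le> ereal (1/2 + 2*e)"
proof -
  have iz: "inv_index G (ctr G) = 0" using inv_index_lcosets[OF subgroup_ctr] inf by simp
  have sp: "set_pmf (M k) \<subseteq> carrier G" for k using M unfolding measures_index_uniformly_def by blast
  obtain N where N: "\<forall>k\<ge>N. (\<forall>x\<in>carrier G. \<bar>measure_pmf.prob (M k) (cent G x) - inv_index G (cent G x)\<bar> < e) \<and>
      (\<forall>c\<in>lcosets (ctr G). \<bar>measure_pmf.prob (M k) c - inv_index G (ctr G)\<bar> < e)"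
    using unif[OF M e] by blast
  have Zc: "ctr G \<subseteq> carrier G" using subgroup.subset[OF subgroup_ctr] .
  have "l_coset G \<one> (ctr G) = ctr G" using lcos_mult_one[OF Zc] .
  then have Zl: "ctr G \<in> lcosets (ctr G)" unfolding LCOSETS_def by force
  have "comm_prob G (M k) \<le> 1/2 + 2*e" if k: "k \<ge> N" for k
  proof -
    define p where "p = M k"
    have pc: "set_pmf p \<subseteq> carrier G" using sp unfolding p_def .
    have N1: "\<forall>x\<in>carrier G. \<bar>measure_pmf.prob p (cent G x) - inv_index G (cent G x)\<bar> < e"
      and pZ: "measure_pmf.prob p (ctr G) < e" using N k Zl iz unfolding p_def by auto
    define f where "f x = measure_pmf.prob p (cent G x)" for x
    have intf: "integrable p f"
      by (rule measure_pmf.integrable_const_bound[where B=1]) (auto simp: f_def)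
    have cp: "comm_prob G p = measure_pmf.expectation p f" using comm_prob_int[OF pc] unfolding f_def by simp
    have intg: "integrable p (\<lambda>x. indicator (ctr G) x + (1/2 + e))"
      by (rule measure_pmf.integrable_const_bound[where B="1 + (1/2 + e)"]) (use e in \<open>auto simp: indicator_def\<close>)
    have "measure_pmf.expectation p f \<le> measure_pmf.expectation p (\<lambda>x. indicator (ctr G) x + (1/2 + e))"
    proof (rule integral_mono_AE[OF intf intg])
      show "AE x in measure_pmf p. f x \<le> indicator (ctr G) x + (1/2 + e)"
      proof (rule AE_pmfI)
        fix x assume "x \<in> set_pmf p"
        then have x: "x \<in> carrier G" using pc by blast
        show "f x \<le> indicator (ctr G) x + (1/2 + e)"
        proof (cases "x \<in> ctr G")
          case True
          have "f x \<le> 1" unfolding f_def by (rule measure_pmf.prob_le_1)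
          then show ?thesis using True e by (simp add: indicator_def)
        next
          case False
          then obtain g where "g \<in> carrier G" "g \<notin> cent G x" using cent_not_ctr[OF x] by blast
          then have "inv_index G (cent G x) \<le> 1/2" using inv_index_proper[OF subgroup_cent[OF x]] by blast
          then show ?thesis using False N1 x unfolding f_def by force
        qed
      qed
    qed
    also have "\<dots> = measure_pmf.expectation p (indicator (ctr G)) + measure_pmf.expectation p (\<lambda>x. 1/2 + e)"
    proof (rule Bochner_Integration.integral_add)
      show "integrable p (indicator (ctr G) :: _ \<Rightarrow> real)"
        by (rule measure_pmf.integrable_const_bound[where B=1]) (auto simp: indicator_def)
    qed simp
    also have "\<dots> = measure_pmf.prob p (ctr G) + (1/2 + e)" by simp
    finally show ?thesis using cp pZ unfolding p_def by simp
  qed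
  then have "eventually (\<lambda>k. ereal (comm_prob G (M k)) \<le> ereal (1/2 + 2*e)) sequentially"
    unfolding eventually_sequentially by auto
  then show ?thesis unfolding dc_seq_def by (rule Limsup_bounded)
qed





theorem corollary1p20:
  fixes G :: "('a, 'b) monoid_scheme"
  assumes "group G" and "countable (carrier G)"
  shows "(\<forall>m. fa_left_inv_mean G m \<and> dc_mean G m = 0 \<longrightarrow>
            (\<forall>m'. fa_left_inv_mean G m' \<longrightarrow> dc_mean G m' = 0))
       \<and> (\<forall>\<alpha>::real. \<alpha> > 1/2 \<longrightarrow>
            ((\<exists>m. fa_left_inv_mean G m \<and> dc_mean G m = \<alpha>) \<or>
             (\<exists>M. measures_index_uniformly G M \<and> dc_seq G M = ereal \<alpha>)) \<longrightarrow>
            (\<forall>m'. fa_left_inv_mean G m' \<longrightarrow> dc_mean G m' = \<alpha>) \<and>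
            (\<forall>M'. measures_index_uniformly G M' \<longrightarrow>
               dc_seq G M' = ereal \<alpha> \<and> (\<lambda>n. comm_prob G (M' n)) \<longlonglongrightarrow> \<alpha>))"
proof -
  interpret group G by (rule assms(1))
  have P1: "\<forall>m. fa_left_inv_mean G m \<and> dc_mean G m = 0 \<longrightarrow>
            (\<forall>m'. fa_left_inv_mean G m' \<longrightarrow> dc_mean G m' = 0)"
  proof (intro allI impI)
    fix m m' assume h: "fa_left_inv_mean G m \<and> dc_mean G m = 0" and m': "fa_left_inv_mean G m'"
    interpret M': gmean G m' by (rule gmeanI[OF m'])
    have "0 \<le> dc_mean G m'"
      unfolding M'.dc_eq by (rule M'.m_nonneg[OF M'.psi_linfty]) (rule M'.m_ind_ge0)
    moreover have "\<not> 0 < dc_mean G m'"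
    proof
      assume "0 < dc_mean G m'"
      then have "0 < dc_mean G m" using part1[of m m'] h m' by blast
      then show False using h by simp
    qed
    ultimately show "dc_mean G m' = 0" by simp
  qed
  define V where "V = (\<Sum>c\<in>LCOSETS G (ctr G). inv_index G (cent G (group.rep G (ctr G) c))) / real (card (LCOSETS G (ctr G)))"
  have P2: "\<forall>\<alpha>::real. \<alpha> > 1/2 \<longrightarrow>
            ((\<exists>m. fa_left_inv_mean G m \<and> dc_mean G m = \<alpha>) \<or>
             (\<exists>M. measures_index_uniformly G M \<and> dc_seq G M = ereal \<alpha>)) \<longrightarrow>
            (\<forall>m'. fa_left_inv_mean G m' \<longrightarrow> dc_mean G m' = \<alpha>) \<and>
            (\<forall>M'. measures_index_uniformly G M' \<longrightarrow>
               dc_seq G M' = ereal \<alpha> \<and> (\<lambda>n. comm_prob G (M' n)) \<longlonglongrightarrow> \<alpha>)"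
  proof (intro allI impI)
    fix \<alpha> :: real assume a: "1/2 < \<alpha>"
      and ex: "(\<exists>m. fa_left_inv_mean G m \<and> dc_mean G m = \<alpha>) \<or>
             (\<exists>M. measures_index_uniformly G M \<and> dc_seq G M = ereal \<alpha>)"
    have fin: "finite (LCOSETS G (ctr G))"
    proof (rule ccontr)
      assume inf: "infinite (LCOSETS G (ctr G))"
      from ex show False
      proof
        assume "\<exists>m. fa_left_inv_mean G m \<and> dc_mean G m = \<alpha>"
        then obtain m where "fa_left_inv_mean G m" "dc_mean G m = \<alpha>" by blast
        then show False using fin_from_mean[of m] a inf by simp
      next
        assume "\<exists>M. measures_index_uniformly G M \<and> dc_seq G M = ereal \<alpha>"
        then obtain M where M: "measures_index_uniformly G M" "dc_seq G M = ereal \<alpha>" by blast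
        define e where "e = (\<alpha> - 1/2) / 4"
        have e: "0 < e" using a unfolding e_def by simp
        have "dc_seq G M \<le> ereal (1/2 + 2*e)" by (rule seq_infinite[OF inf M(1) e])
        then have "\<alpha> \<le> 1/2 + 2*e" using M(2) by simp
        then show False using a unfolding e_def by (simp add: field_simps)
      qed
    qed
    have Vm: "dc_mean G m = V" if "fa_left_inv_mean G m" for m
      using part2_mean[OF fin that] unfolding V_def by simp
    have Vs: "(\<lambda>k. comm_prob G (M k)) \<longlonglongrightarrow> V \<and> dc_seq G M = ereal V"
      if M: "measures_index_uniformly G M" for M
    proof
      show lim: "(\<lambda>k. comm_prob G (M k)) \<longlonglongrightarrow> V" using part2_seq[OF fin M] unfolding V_def .
      show "dc_seq G M = ereal V"
        unfolding dc_seq_def by (rule lim_imp_Limsup[OF trivial_limit_sequentially tendsto_ereal[OF lim]])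
    qed
    have aV: "\<alpha> = V"
      using ex
    proof
      assume "\<exists>m. fa_left_inv_mean G m \<and> dc_mean G m = \<alpha>"
      then show ?thesis using Vm by metis
    next
      assume "\<exists>M. measures_index_uniformly G M \<and> dc_seq G M = ereal \<alpha>"
      then obtain M where "measures_index_uniformly G M" "dc_seq G M = ereal \<alpha>" by blast
      then show ?thesis using Vs by force
    qed
    show "(\<forall>m'. fa_left_inv_mean G m' \<longrightarrow> dc_mean G m' = \<alpha>) \<and>
            (\<forall>M'. measures_index_uniformly G M' \<longrightarrow>
               dc_seq G M' = ereal \<alpha> \<and> (\<lambda>n. comm_prob G (M' n)) \<longlonglongrightarrow> \<alpha>)"
      using Vm Vs aV by blast
  qed
  show ?thesis using P1 P2 by blast
qed


end
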